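(* Let $L\in\mathbb Z^+$ and let $\mathcal C$ be a linear $[n,k]$ MDS code over $F$ with $k<n$. Write $n-k=(L+1)u+r$ with $u\in\mathbb Z_{\ge0}$ and $r\in\{1,2,\dots,L+1\}$, and suppose $$L\le\binom{k-1+u+r}{k-1}.$$ If $\mathcal C$ is $(\tau,L)$-list decodable (for some $\tau\in\mathbb Z_{\ge0}$), then $\tau\le\frac{L(n-k)}{L+1}$.
   Context: $F=\mathrm{GF}(q)$. For $L\in\mathbb Z^+$ and $\tau\in\mathbb Z_{\ge0}$, a code $\mathcal C\subseteq F^n$ is $(\tau,L)$-list decodable if for every $y\in F^n$ at most $L$ codewords of $\mathcal C$ lie at Hamming distance at most $\tau$ from $y$. *)

theory Defs
  imports "HOL-Analysis.Analysis"
begin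

text \<open>Vectors of F^n are modelled as 'a ^ 'n with n = CARD('n); F is a finite field 'a.\<close>

definition hamming_dist :: "'a ^ 'n \<Rightarrow> 'a ^ 'n \<Rightarrow> nat" where
  "hamming_dist x y = card {i. x $ i \<noteq> y $ i}"

definition min_dist :: "('a ^ 'n) set \<Rightarrow> nat" where
  "min_dist C = Min {hamming_dist x y | x y. x \<in> C \<and> y \<in> C \<and> x \<noteq> y}"

definition linear_code :: "nat \<Rightarrow> ('a::field ^ 'n) set \<Rightarrow> bool" where
  "linear_code k C \<longleftrightarrow> vec.subspace C \<and> vec.dim C = k"

definition MDS_code :: "nat \<Rightarrow> ('a::field ^ 'n::finite) set \<Rightarrow> bool" where
  "MDS_code k C \<longleftrightarrow> linear_code k C \<and> min_dist C = CARD('n) - k + 1"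

definition list_decodable :: "nat \<Rightarrow> nat \<Rightarrow> ('a ^ 'n) set \<Rightarrow> bool" where
  "list_decodable \<tau> L C \<longleftrightarrow>
     (\<forall>y. card {c \<in> C. hamming_dist c y \<le> \<tau>} \<le> L)"

end

theory Submission
  imports Defs
begin

lemma mds_weight:
  fixes C :: "('a::{field,finite} ^ 'n::finite) set"
  assumes "MDS_code k C" "c \<in> C" "c \<noteq> 0"
  shows "CARD('n) - k + 1 \<le> card {x. c$x \<noteq> 0}"
proof -
  have sub: "vec.subspace C" using assms(1) unfolding MDS_code_def linear_code_def by auto
  have z: "0 \<in> C" using vec.subspace_0[OF sub] .
  let ?D = "{hamming_dist x y | x y. x \<in> C \<and> y \<in> C \<and> x \<noteq> y}"
  have fin: "finite ?D"
    by (rule finite_subset[of _ "{..CARD('n)}"]) (auto simp: hamming_dist_def card_mono)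
  have "hamming_dist c 0 \<in> ?D" using assms z by auto
  then have "min_dist C \<le> hamming_dist c 0" unfolding min_dist_def using fin by auto
  moreover have "hamming_dist c 0 = card {x. c$x \<noteq> 0}" unfolding hamming_dist_def by simp
  ultimately show ?thesis using assms(1) unfolding MDS_code_def by auto
qed

lemma mds_zero:
  fixes C :: "('a::{field,finite} ^ 'n::finite) set"
  assumes "MDS_code k C" "k \<le> CARD('n)" "c \<in> C" "Z \<subseteq> {x. c$x = 0}" "k \<le> card Z"
  shows "c = 0"
proof (rule ccontr)
  assume "c \<noteq> 0"
  then have w: "CARD('n) - k + 1 \<le> card {x. c$x \<noteq> 0}" using mds_weight assms by blast
  have "{x. c$x \<noteq> 0} = UNIV - {x. c$x = 0}" by auto
  then have "card {x. c$x \<noteq> 0} = CARD('n) - card {x. c$x = 0}"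
    by (simp add: card_Diff_subset)
  moreover have "card Z \<le> card {x. c$x = 0}" using assms(4) by (simp add: card_mono)
  ultimately show False using w assms by linarith
qed

lemma mds_exists:
  fixes C :: "('a::{field,finite} ^ 'n::finite) set"
  assumes "MDS_code k C" "k \<le> CARD('n)" "card S + 1 = k" "p \<notin> S"
  shows "\<exists>c\<in>C. (\<forall>x\<in>S. c$x = 0) \<and> c$p = 1"
proof -
  have sub: "vec.subspace C" and dk: "vec.dim C = k"
    using assms(1) unfolding MDS_code_def linear_code_def by auto
  have "\<exists>c\<in>C. c \<noteq> 0 \<and> (\<forall>x\<in>S. c$x = 0)"
  proof (rule ccontr)
    assume H: "\<not> ?thesis"
    define f :: "'a^'n \<Rightarrow> 'a^'n" where "f c = (\<chi> x. if x \<in> S then c$x else 0)" for c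
    have lin: "Vector_Spaces.linear (*s) (*s) f"
      unfolding Vector_Spaces.linear_iff f_def
      by (auto simp: vec_eq_iff vec.vector_space_axioms)
    have inj: "inj_on f (vec.span C)"
    proof (rule inj_onI)
      fix a b assume ab: "a \<in> vec.span C" "b \<in> vec.span C" "f a = f b"
      have "a - b \<in> C" using ab sub vec.span_eq_iff vec.subspace_diff by metis
      moreover have "\<forall>x\<in>S. (a - b)$x = 0" using ab(3) unfolding f_def
        by (auto simp: vec_eq_iff) (metis)
      ultimately show "a = b" using H by auto
    qed
    have d: "vec.dim (f ` C) = k" using vec.dim_image_eq[OF lin inj] dk by simp
    obtain B where B: "B \<subseteq> f ` C" "vec.independent B" "card B = vec.dim (f ` C)"
      using vec.basis_exists[of "f ` C"] by metis
    let ?T = "(\<lambda>x. axis x (1::'a)) ` S"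
    have Bsp: "B \<subseteq> vec.span ?T"
    proof
      fix v assume "v \<in> B"
      then obtain c where v: "v = f c" using B by auto
      have "v = (\<Sum>x\<in>S. (c$x) *s axis x 1)"
        unfolding v f_def
        by (simp add: vec_eq_iff sum_component axis_def if_distrib sum.delta cong: if_cong)
      also have "\<dots> \<in> vec.span ?T"
        by (intro vec.span_sum vec.span_scale vec.span_base) auto
      finally show "v \<in> vec.span ?T" .
    qed
    have "card B \<le> card ?T" using vec.independent_span_bound[OF _ B(2) Bsp] by simp
    also have "\<dots> \<le> card S" by (rule card_image_le) simp
    finally show False using B d assms(3) by simp
  qed
  then obtain c where c: "c \<in> C" "c \<noteq> 0" "\<forall>x\<in>S. c$x = 0" by blast
  have "c$p \<noteq> 0"
  proof
    assume "c$p = 0"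
    then have "insert p S \<subseteq> {x. c$x = 0}" using c by auto
    moreover have "k \<le> card (insert p S)" using assms(3,4) by simp
    ultimately show False using mds_zero[OF assms(1,2) c(1)] c(2) by blast
  qed
  then have "(inverse (c$p)) *s c \<in> C" using vec.subspace_scale[OF sub c(1)] by blast
  moreover have "((inverse (c$p)) *s c)$p = 1" using \<open>c$p \<noteq> 0\<close> by simp
  ultimately show ?thesis using c(3) by (intro bexI[of _ "(inverse (c$p)) *s c"]) auto
qed

lemma div_block: "(u::nat) > 0 \<Longrightarrow> i*u \<le> m \<Longrightarrow> m < i*u + u \<Longrightarrow> m div u = i"
  by (metis add.commute div_less div_mult_self2 le_add_diff_inverse less_diff_conv2 add_0 linorder_neq_iff not_gr0 mult.commute)

theorem mainTheorem4:
  fixes C :: "('a::{field,finite} ^ 'n::finite) set"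
    and k L u r \<tau> :: nat
  assumes "L \<ge> 1"
    and "1 \<le> k" and "k < CARD('n)"
    and "MDS_code k C"
    and "CARD('n) - k = (L + 1) * u + r"
    and "1 \<le> r" and "r \<le> L + 1"
    and "L \<le> (k - 1 + u + r) choose (k - 1)"
    and "list_decodable \<tau> L C"
  shows "real \<tau> \<le> real L * real (CARD('n) - k) / real (L + 1)"
proof (rule ccontr)
  assume neg: "\<not> ?thesis"
  define n where "n = CARD('n)"
  define K where "K = k + u + r"
  have nK: "n = K + L * u" using assms(3,5) unfolding n_def K_def by (simp add: algebra_simps)
  have "real L * real (n - k) < real \<tau> * real (L + 1)"
    using neg unfolding n_def by (simp add: field_simps)
  then have "L * (n - k) < \<tau> * (L + 1)" by (metis of_nat_less_iff of_nat_mult)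
  then have lt: "L * ((L + 1) * u + r) < \<tau> * (L + 1)" using assms(5) unfolding n_def by simp
  have tau: "L * u + r \<le> \<tau>"
  proof (rule ccontr)
    assume "\<not> ?thesis"
    then have "(\<tau> + 1) * (L + 1) \<le> (L * u + r) * (L + 1)" by (intro mult_le_mono1) simp
    then show False using lt assms(7) by (simp add: algebra_simps)
  qed
  obtain g where g: "bij_betw g {0..<n} (UNIV::'n set)"
    using ex_bij_betw_nat_finite[of "UNIV::'n set"] unfolding n_def by auto
  define h where "h = inv_into {0..<n} g"
  have ginj: "inj_on g {0..<n}" using g bij_betw_def by blast
  have hlt: "h x < n" for x
    unfolding h_def using g by (metis atLeastLessThan_iff bij_betw_def inv_into_into UNIV_I)
  have gh: "g (h x) = x" for x
    unfolding h_def using g by (metis bij_betw_def f_inv_into_f UNIV_I)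
  have hg: "j < n \<Longrightarrow> h (g j) = j" for j
    unfolding h_def using ginj by (simp add: inv_into_f_f)
  define A where "A = {B. B \<subseteq> {1..<K} \<and> card B = k - 1}"
  have "card A = (K - 1) choose (k - 1)" unfolding A_def using n_subsets[of "{1..<K}" "k-1"] by simp
  moreover have "K - 1 = k - 1 + u + r" using assms(2) unfolding K_def by simp
  ultimately have cA: "L \<le> card A" using assms(8) by simp
  have finA: "finite A" unfolding A_def by simp
  obtain A' where A': "A' \<subseteq> A" "card A' = L" using obtain_subset_with_card_n[OF cA] by metis
  obtain T where T: "bij_betw T {0..<L} A'"
    using ex_bij_betw_nat_finite[of A'] A' finite_subset[OF A'(1) finA] by auto
  have TA: "i < L \<Longrightarrow> T i \<subseteq> {1..<K} \<and> card (T i) = k - 1" for i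
  proof -
    assume "i < L"
    then have "T i \<in> A" using bij_betw_apply[OF T] A'(1) by auto
    then show ?thesis unfolding A_def by auto
  qed
  have Tinj: "inj_on T {0..<L}" using T bij_betw_def by blast
  have Kn: "K \<le> n" using nK by simp
  have Tn: "i < L \<Longrightarrow> T i \<subseteq> {0..<n}" for i using TA Kn by fastforce
  have ex: "\<forall>i\<in>{0..<L}. \<exists>c\<in>C. (\<forall>x\<in>g ` T i. c$x = 0) \<and> c$(g 0) = 1"
  proof
    fix i assume i: "i \<in> {0..<L}"
    have "card (g ` T i) = k - 1"
      using TA[of i] i card_image[OF inj_on_subset[OF ginj Tn[of i]]] by simp
    moreover have "g 0 \<notin> g ` T i"
    proof
      assume "g 0 \<in> g ` T i"
      then obtain j where "j \<in> T i" "g 0 = g j" by auto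
      moreover have "0 < n" using Kn assms(2) unfolding K_def by simp
      ultimately show False using TA[of i] Tn[of i] i ginj unfolding inj_on_def by fastforce
    qed
    ultimately show "\<exists>c\<in>C. (\<forall>x\<in>g ` T i. c$x = 0) \<and> c$(g 0) = 1"
      using mds_exists[OF assms(4), of "g ` T i" "g 0"] assms(2,3) by simp
  qed
  then obtain c where c: "\<And>i. i < L \<Longrightarrow> c i \<in> C" "\<And>i x. i < L \<Longrightarrow> x \<in> g ` T i \<Longrightarrow> c i $ x = 0"
      "\<And>i. i < L \<Longrightarrow> c i $ (g 0) = 1"
    using bchoice[OF ex[unfolded Bex_def]] by (metis atLeastLessThan_iff imageE zero_le)
  define y :: "'a^'n" where
    "y = (\<chi> x. if h x = 0 then 1 else if K \<le> h x then c ((h x - K) div u) $ x else 0)"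
  have sub: "vec.subspace C" using assms(4) unfolding MDS_code_def linear_code_def by auto
  have z: "0 \<in> C" using vec.subspace_0[OF sub] .
  have card_g: "card (g ` J) = card J" if "J \<subseteq> {0..<n}" for J
    using card_image[OF inj_on_subset[OF ginj that]] .
  have d0: "hamming_dist 0 y \<le> \<tau>"
  proof -
    have "{i. (0::'a^'n)$i \<noteq> y$i} \<subseteq> g ` ({0} \<union> {K..<n})"
    proof
      fix x assume "x \<in> {i. (0::'a^'n)$i \<noteq> y$i}"
      then have "h x = 0 \<or> K \<le> h x" unfolding y_def by (auto split: if_splits)
      then show "x \<in> g ` ({0} \<union> {K..<n})" using hlt[of x] gh[of x] by (metis Un_iff atLeastLessThan_iff image_eqI insertI1)
    qed
    then have "hamming_dist 0 y \<le> card (g ` ({0} \<union> {K..<n}))"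
      unfolding hamming_dist_def by (simp add: card_mono)
    also have "\<dots> \<le> card ({0} \<union> {K..<n})" by (rule card_image_le) simp
    also have "\<dots> \<le> 1 + L * u" using card_Un_le[of "{0}" "{K..<n}"] nK by simp
    finally show ?thesis using tau assms(6) by simp
  qed
  have di: "hamming_dist (c i) y \<le> \<tau>" if i: "i < L" for i
  proof -
    define Bl where "Bl = {K + i*u..<K + i*u + u}"
    define E where "E = T i \<union> {0} \<union> Bl"
    have Bln: "Bl \<subseteq> {0..<n}"
    proof -
      have "i * u + u \<le> L * u" using i by (metis add.commute mult_Suc mult_le_mono1 Suc_leI)
      then show ?thesis unfolding Bl_def using nK by auto
    qed
    have En: "E \<subseteq> {0..<n}" unfolding E_def using Tn[OF i] Bln Kn assms(2) unfolding K_def by auto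
    have cardE: "card E = k + u"
    proof -
      have n0: "0 \<notin> T i" using TA[OF i] by auto
      have fT: "finite (T i)" using TA[OF i] finite_subset by blast
      have "T i \<union> {0} = insert 0 (T i)" by auto
      then have "card (T i \<union> {0}) = k - 1 + 1"
        using TA[OF i] n0 fT by simp
      moreover have "(T i \<union> {0}) \<inter> Bl = {}" using TA[OF i] assms(2) unfolding Bl_def K_def by fastforce
      ultimately have "card E = k - 1 + 1 + u" unfolding E_def
        using card_Un_disjoint[of "T i \<union> {0}" Bl] fT by (simp add: Bl_def)
      then show ?thesis using assms(2) by simp
    qed
    have "{x. c i $ x \<noteq> y $ x} \<subseteq> g ` ({0..<n} - E)"
    proof
      fix x assume x: "x \<in> {x. c i $ x \<noteq> y $ x}"
      have "h x \<notin> E"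
      proof
        assume hE: "h x \<in> E"
        show False
        proof (cases "h x \<in> T i")
          case True
          then have "x \<in> g ` T i" using gh[of x] by (metis image_eqI)
          then have "c i $ x = 0" using c(2)[OF i] by simp
          moreover have "y $ x = 0" using True TA[OF i] unfolding y_def by auto
          ultimately show False using x by simp
        next
          case False
          show False
          proof (cases "h x = 0")
            case True
            then have "x = g 0" using gh[of x] by simp
            then show False using x c(3)[OF i] True unfolding y_def by simp
          next
            case False
            then have hb: "h x \<in> Bl" using hE \<open>h x \<notin> T i\<close> unfolding E_def by auto
            then have up: "u > 0" unfolding Bl_def by auto
            have "(h x - K) div u = i" using hb up unfolding Bl_def
              by (intro div_block) auto
            then have "y $ x = c i $ x" using hb False unfolding y_def Bl_def by auto
            then show False using x by simp
          qed
        qed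
      qed
      then show "x \<in> g ` ({0..<n} - E)" using hlt[of x] gh[of x] by (metis DiffI atLeastLessThan_iff image_eqI zero_le)
    qed
    then have "hamming_dist (c i) y \<le> card (g ` ({0..<n} - E))"
      unfolding hamming_dist_def by (simp add: card_mono)
    also have "\<dots> \<le> card ({0..<n} - E)" by (rule card_image_le) simp
    also have "\<dots> = n - (k + u)" using En cardE by (simp add: card_Diff_subset finite_subset)
    also have "\<dots> = L * u + r" using nK unfolding K_def by simp
    finally show ?thesis using tau by simp
  qed
  have cinj: "inj_on c {0..<L}"
  proof (rule inj_onI)
    fix i j assume ij: "i \<in> {0..<L}" "j \<in> {0..<L}" "c i = c j"
    show "i = j"
    proof (rule ccontr)
      assume ne: "i \<noteq> j"
      then have Tne: "T i \<noteq> T j" using Tinj ij unfolding inj_on_def by blast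
      have fin: "finite (T i)" "finite (T j)" using TA ij by (meson atLeastLessThan_iff finite_atLeastLessThan finite_subset)+
      have "k \<le> card (T i \<union> T j)"
      proof (rule ccontr)
        assume "\<not> ?thesis"
        then have le: "card (T i \<union> T j) \<le> k - 1" by simp
        have "T i = T i \<union> T j" using card_subset_eq[of "T i \<union> T j" "T i"] fin TA ij le
          by (metis Un_upper1 atLeastLessThan_iff card_mono finite_UnI le_antisym)
        moreover have "T j = T i \<union> T j" using card_subset_eq[of "T i \<union> T j" "T j"] fin TA ij le
          by (metis Un_upper2 atLeastLessThan_iff card_mono finite_UnI le_antisym)
        ultimately show False using Tne by simp
      qed
      moreover have "card (g ` (T i \<union> T j)) = card (T i \<union> T j)"
        using card_g[of "T i \<union> T j"] Tn ij by auto
      moreover have "g ` (T i \<union> T j) \<subseteq> {x. c i $ x = 0}"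
      proof
        fix x assume "x \<in> g ` (T i \<union> T j)"
        then have "x \<in> g ` T i \<or> x \<in> g ` T j" by auto
        then show "x \<in> {x. c i $ x = 0}" using c(2)[of i x] c(2)[of j x] ij by auto
      qed
      ultimately have "c i = 0" using mds_zero[OF assms(4) _ c(1), of i "g ` (T i \<union> T j)"] ij assms(3)
        by simp
      then show False using c(3)[of i] ij by simp
    qed
  qed
  define X where "X = insert 0 (c ` {0..<L})"
  have "0 \<notin> c ` {0..<L}" using c(3) by force
  then have cX: "card X = L + 1" unfolding X_def using card_image[OF cinj] by simp
  have "X \<subseteq> {v \<in> C. hamming_dist v y \<le> \<tau>}"
    unfolding X_def using z d0 di c(1) by auto
  then have "card X \<le> card {v \<in> C. hamming_dist v y \<le> \<tau>}" by (simp add: card_mono)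
  moreover have "card {v \<in> C. hamming_dist v y \<le> \<tau>} \<le> L"
    using assms(9) unfolding list_decodable_def by blast
  ultimately show False using cX by simp
qed

end
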